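(* Let $d\ge1$, and for every $S\subseteq\{1,\dots,d\}$ let $\hat p_S$ be a probability density on $\mathbb{R}^{S}$. Let $\hat m^{(0)}=\{\hat m^{(0)}_S: S\subseteq\{1,\dots,d\}\}$ be any family of functions with $\hat m^{(0)}_S:\mathbb{R}^S\to\mathbb{R}$, and set $\hat m_{\mathrm{Sum}}(x)=\sum_{S\subseteq\{1,\dots,d\}}\hat m^{(0)}_S(x_S)$ for $x\in\mathbb{R}^d$. Then there exists exactly one family of functions $\hat m^\ast=\{\hat m^\ast_S: S\subseteq\{1,\dots,d\}\}$, $\hat m^\ast_S:\mathbb{R}^S\to\mathbb{R}$, such that $\sum_{S}\hat m^\ast_S(x_S)=\hat m_{\mathrm{Sum}}(x)$ for all $x$ and such that for every $S\subseteq\{1,\dots,d\}$ $$\sum_{T\subseteq\{1,\dots,d\}:\ T\cap S\neq\emptyset}\int \hat m^\ast_T(x_T)\,\hat p_S(x_S)\,\mathrm dx_S=0 .$$ These functions are given by $$\hat m^\ast_S(x_S)=\sum_{V\subseteq S}(-1)^{|S\setminus V|}\int \hat m_{\mathrm{Sum}}(x)\,\hat p_{-V}(x_{-V})\,\mathrm dx_{-V}.$$ In particular, $\hat m^\ast_S$ depends on $\hat m^{(0)}$ only through $\hat m_{\mathrm{Sum}}$.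
   Context: For $S\subseteq\{1,\dots,d\}$, $x_S=(x_k)_{k\in S}$, $-V$ denotes the complement $\{1,\dots,d\}\setminus V$, and $\mathrm dx_S$ denotes integration over the coordinates in $S$ (for the empty set the integral is the identity). Functions $\hat m_\emptyset$ are constants. All integrals appearing are assumed to exist and be finite. *)

theory Defs
  imports "HOL-Probability.Probability"
begin

text \<open>Coordinates are indexed by the set D = {1..d}. A point of R^d is modelled as a
total function x :: nat => real (only coordinates in D matter). A function on R^S is
modelled as a function f :: (nat => real) => real that is applied to  restrict x S ,
i.e. to the element x_S of the extensional function space  S ->E UNIV , which is the
carrier of the product Lebesgue measure  PiM S (%_. lborel)  on R^S.\<close>

definition coords :: "nat \<Rightarrow> nat set" where
  "coords d = {1..d}"

definition leb :: "nat set \<Rightarrow> (nat \<Rightarrow> real) measure" where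
  "leb S = PiM S (\<lambda>_. lborel)"

definition upd :: "nat set \<Rightarrow> (nat \<Rightarrow> real) \<Rightarrow> (nat \<Rightarrow> real) \<Rightarrow> (nat \<Rightarrow> real)" where
  "upd S y x = (\<lambda>i. if i \<in> S then y i else x i)"

definition is_density :: "nat set \<Rightarrow> ((nat \<Rightarrow> real) \<Rightarrow> real) \<Rightarrow> bool" where
  "is_density S q \<longleftrightarrow> q \<in> borel_measurable (leb S)
     \<and> (\<forall>y \<in> space (leb S). 0 \<le> q y)
     \<and> (\<integral>\<^sup>+ y. ennreal (q y) \<partial>leb S) = 1"

definition m_sum :: "nat \<Rightarrow> (nat set \<Rightarrow> (nat \<Rightarrow> real) \<Rightarrow> real) \<Rightarrow> (nat \<Rightarrow> real) \<Rightarrow> real" where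
  "m_sum d m0 x = (\<Sum>S\<in>Pow (coords d). m0 S (restrict x S))"

definition m_star :: "nat \<Rightarrow> (nat set \<Rightarrow> (nat \<Rightarrow> real) \<Rightarrow> real)
     \<Rightarrow> (nat set \<Rightarrow> (nat \<Rightarrow> real) \<Rightarrow> real) \<Rightarrow> nat set \<Rightarrow> (nat \<Rightarrow> real) \<Rightarrow> real" where
  "m_star d p m0 S x = (\<Sum>V\<in>Pow S. (-1) ^ card (S - V) *
      (\<integral> y. m_sum d m0 (upd (coords d - V) y x) * p (coords d - V) y \<partial>leb (coords d - V)))"

definition integrals_exist :: "nat \<Rightarrow> (nat set \<Rightarrow> (nat \<Rightarrow> real) \<Rightarrow> real)
     \<Rightarrow> (nat set \<Rightarrow> (nat \<Rightarrow> real) \<Rightarrow> real) \<Rightarrow> bool" where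
  "integrals_exist d p m \<longleftrightarrow>
     (\<forall>S T x. S \<subseteq> coords d \<longrightarrow> T \<subseteq> coords d \<longrightarrow>
        integrable (leb S) (\<lambda>y. m T (restrict (upd S y x) T) * p S y))"

definition admissible :: "nat \<Rightarrow> (nat set \<Rightarrow> (nat \<Rightarrow> real) \<Rightarrow> real)
     \<Rightarrow> (nat set \<Rightarrow> (nat \<Rightarrow> real) \<Rightarrow> real) \<Rightarrow> (nat set \<Rightarrow> (nat \<Rightarrow> real) \<Rightarrow> real) \<Rightarrow> bool" where
  "admissible d p m0 m \<longleftrightarrow>
     integrals_exist d p m
     \<and> (\<forall>x. (\<Sum>T\<in>Pow (coords d). m T (restrict x T)) = m_sum d m0 x)
     \<and> (\<forall>S x. S \<subseteq> coords d \<longrightarrow>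
          (\<Sum>T\<in>{T\<in>Pow (coords d). T \<inter> S \<noteq> {}}.
              \<integral> y. m T (restrict (upd S y x) T) * p S y \<partial>leb S) = 0)"

end

theory Submission
  imports Defs
begin

lemma alt_pow: "finite B \<Longrightarrow> (\<Sum>W\<in>Pow B. (-1::real) ^ card W) = (if B = {} then 1 else 0)"
proof (induction B rule: finite_induct)
  case empty then show ?case by simp
next
  case (insert a B)
  have "(\<Sum>W\<in>Pow (insert a B). (-1::real) ^ card W)
      = (\<Sum>W\<in>Pow B. (-1::real) ^ card W) + (\<Sum>W\<in>insert a ` Pow B. (-1::real) ^ card W)"
    unfolding Pow_insert
    by (rule sum.union_disjoint) (use insert in auto)
  also have "(\<Sum>W\<in>insert a ` Pow B. (-1::real) ^ card W) = (\<Sum>W\<in>Pow B. (-1::real) ^ card (insert a W))"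
    by (rule sum.reindex_cong[where l="insert a"]) (use insert in \<open>auto simp: inj_on_def\<close>)
  also have "\<dots> = - (\<Sum>W\<in>Pow B. (-1::real) ^ card W)"
    by (simp add: sum_negf[symmetric]) (rule sum.cong; use insert in \<open>auto simp: card_insert_if finite_subset\<close>)
  finally show ?case by simp
qed

lemma alt_super: "finite A \<Longrightarrow> V \<subseteq> A \<Longrightarrow>
  (\<Sum>T\<in>{T\<in>Pow A. V \<subseteq> T}. (-1::real) ^ card (T - V)) = (if V = A then 1 else 0)"
proof -
  assume a: "finite A" "V \<subseteq> A"
  have "(\<Sum>T\<in>{T\<in>Pow A. V \<subseteq> T}. (-1::real) ^ card (T - V)) = (\<Sum>W\<in>Pow (A - V). (-1::real) ^ card W)"
    by (rule sum.reindex_bij_witness[where i="\<lambda>W. W \<union> V" and j="\<lambda>T. T - V"]) (use a in auto)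
  also have "\<dots> = (if V = A then 1 else 0)" using a by (auto simp: alt_pow)
  finally show ?thesis .
qed

definition gf :: "nat \<Rightarrow> (nat set \<Rightarrow> (nat \<Rightarrow> real) \<Rightarrow> real)
     \<Rightarrow> (nat set \<Rightarrow> (nat \<Rightarrow> real) \<Rightarrow> real) \<Rightarrow> nat set \<Rightarrow> (nat \<Rightarrow> real) \<Rightarrow> real" where
  "gf d p m0 V x = (\<integral> y. m_sum d m0 (upd (coords d - V) y x) * p (coords d - V) y \<partial>leb (coords d - V))"

lemma m_star_gf: "m_star d p m0 S x = (\<Sum>V\<in>Pow S. (-1)^card(S-V) * gf d p m0 V x)"
  by (simp add: m_star_def gf_def)

lemma finite_coords[simp]: "finite (coords d)"
  by (simp add: coords_def)

lemma m_sum_cong: "(\<And>i. i \<in> coords d \<Longrightarrow> z i = z' i) \<Longrightarrow> m_sum d m0 z = m_sum d m0 z'"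
  unfolding m_sum_def
proof (rule sum.cong)
  fix S assume "\<And>i. i \<in> coords d \<Longrightarrow> z i = z' i" "S \<in> Pow (coords d)"
  then have "restrict z S = restrict z' S" by (intro ext) (auto simp: restrict_def)
  then show "m0 S (restrict z S) = m0 S (restrict z' S)" by simp
qed simp

lemma gf_cong: "V \<subseteq> coords d \<Longrightarrow> (\<And>i. i \<in> V \<Longrightarrow> z i = z' i) \<Longrightarrow> gf d p m0 V z = gf d p m0 V z'"
  unfolding gf_def
  by (rule Bochner_Integration.integral_cong[OF refl], subst m_sum_cong[where z'="upd (coords d - V) _ z'"])
     (auto simp: upd_def)

lemma m_star_restrict: "S \<subseteq> coords d \<Longrightarrow> m_star d p m0 S (restrict x S) = m_star d p m0 S x"
  unfolding m_star_gf
  by (rule sum.cong[OF refl], subst gf_cong[where z'=x]) auto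

lemma gf_top: assumes "is_density {} (p {})" shows "gf d p m0 (coords d) x = m_sum d m0 x"
proof -
  have "ennreal (p {} (\<lambda>_. undefined)) = 1"
    using assms by (simp add: is_density_def leb_def PiM_empty nn_integral_count_space_finite)
  moreover have "p {} (\<lambda>_. undefined) \<ge> 0"
    using assms by (simp add: is_density_def leb_def PiM_empty)
  ultimately have "p {} (\<lambda>_. undefined) = 1" by simp
  then show ?thesis
    by (simp add: gf_def leb_def PiM_empty lebesgue_integral_count_space_finite upd_def)
qed

lemma density_int: assumes "is_density S q"
  shows "integrable (leb S) q" "integral\<^sup>L (leb S) q = 1"
proof -
  have m: "q \<in> borel_measurable (leb S)" and nn: "\<forall>y \<in> space (leb S). 0 \<le> q y"
    and one: "(\<integral>\<^sup>+ y. ennreal (q y) \<partial>leb S) = 1"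
    using assms by (auto simp: is_density_def)
  show i: "integrable (leb S) q"
    by (rule integrableI_nonneg) (use m nn one in auto)
  have "(\<integral>\<^sup>+ y. ennreal (q y) \<partial>leb S) = ennreal (integral\<^sup>L (leb S) q)"
    by (rule nn_integral_eq_integral) (use i nn in auto)
  with one show "integral\<^sup>L (leb S) q = 1"
    by (metis ennreal_eq_1 integral_nonneg_AE AE_I2 nn)
qed

lemma sum_gf: assumes "A \<subseteq> coords d"
  shows "(\<Sum>T\<in>Pow A. m_star d p m0 T x) = gf d p m0 A x"
proof -
  have fA: "finite A" using assms by (rule finite_subset) simp
  have "(\<Sum>T\<in>Pow A. m_star d p m0 T x)
     = (\<Sum>T\<in>Pow A. \<Sum>V\<in>{V\<in>Pow A. V \<subseteq> T}. (-1)^card(T-V) * gf d p m0 V x)"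
  proof (rule sum.cong[OF refl])
    fix T assume "T \<in> Pow A"
    then have "{V\<in>Pow A. V \<subseteq> T} = Pow T" by auto
    then show "m_star d p m0 T x = (\<Sum>V\<in>{V\<in>Pow A. V \<subseteq> T}. (-1)^card(T-V) * gf d p m0 V x)"
      by (simp add: m_star_gf)
  qed
  also have "\<dots> = (\<Sum>V\<in>Pow A. \<Sum>T\<in>{T\<in>Pow A. V \<subseteq> T}. (-1)^card(T-V) * gf d p m0 V x)"
    by (rule sum.swap_restrict) (use fA in auto)
  also have "\<dots> = (\<Sum>V\<in>Pow A. (if V = A then 1 else 0) * gf d p m0 V x)"
  proof (rule sum.cong[OF refl])
    fix V assume V: "V \<in> Pow A"
    have "(\<Sum>T\<in>{T\<in>Pow A. V \<subseteq> T}. (-1)^card(T-V) * gf d p m0 V x)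
        = (\<Sum>T\<in>{T\<in>Pow A. V \<subseteq> T}. (-1::real)^card(T-V)) * gf d p m0 V x"
      by (simp add: sum_distrib_right)
    also have "\<dots> = (if V = A then 1 else 0) * gf d p m0 V x"
      using alt_super[OF fA, of V] V by simp
    finally show "(\<Sum>T\<in>{T\<in>Pow A. V \<subseteq> T}. (-1)^card(T-V) * gf d p m0 V x)
        = (if V = A then 1 else 0) * gf d p m0 V x" .
  qed
  also have "\<dots> = (\<Sum>V\<in>Pow A. if V = A then gf d p m0 V x else 0)"
    by (rule sum.cong) auto
  also have "\<dots> = gf d p m0 A x" using fA by simp
  finally show ?thesis .
qed

lemma key:
  assumes dens: "is_density S (p S)" and S: "S \<subseteq> coords d"
    and ie: "integrals_exist d p m"
    and sumid: "\<And>x. (\<Sum>T\<in>Pow (coords d). m T (restrict x T)) = m_sum d m0 x"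
  shows "(\<Sum>T\<in>{T\<in>Pow (coords d). T \<inter> S \<noteq> {}}. \<integral> y. m T (restrict (upd S y x) T) * p S y \<partial>leb S)
       = gf d p m0 (coords d - S) x - (\<Sum>T\<in>Pow (coords d - S). m T (restrict x T))"
proof -
  let ?D = "coords d"
  let ?I = "\<lambda>T. \<integral> y. m T (restrict (upd S y x) T) * p S y \<partial>leb S"
  have DS: "?D - (?D - S) = S" using S by auto
  have "gf d p m0 (?D - S) x = (\<integral> y. m_sum d m0 (upd S y x) * p S y \<partial>leb S)"
    by (simp add: gf_def DS)
  also have "\<dots> = (\<integral> y. (\<Sum>T\<in>Pow ?D. m T (restrict (upd S y x) T) * p S y) \<partial>leb S)"
    by (simp add: sumid[symmetric] sum_distrib_right)
  also have "\<dots> = (\<Sum>T\<in>Pow ?D. ?I T)"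
    by (rule Bochner_Integration.integral_sum) (use ie S in \<open>auto simp: integrals_exist_def\<close>)
  also have "\<dots> = (\<Sum>T\<in>{T\<in>Pow ?D. T \<inter> S \<noteq> {}}. ?I T) + (\<Sum>T\<in>Pow (?D - S). ?I T)"
  proof -
    have "Pow ?D = {T\<in>Pow ?D. T \<inter> S \<noteq> {}} \<union> Pow (?D - S)" by auto
    moreover have "{T\<in>Pow ?D. T \<inter> S \<noteq> {}} \<inter> Pow (?D - S) = {}" by auto
    ultimately show ?thesis
      by (metis (no_types, lifting) finite_Pow_iff finite_Un finite_coords sum.union_disjoint)
  qed
  also have "(\<Sum>T\<in>Pow (?D - S). ?I T) = (\<Sum>T\<in>Pow (?D - S). m T (restrict x T))"
  proof (rule sum.cong[OF refl])
    fix T assume T: "T \<in> Pow (?D - S)"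
    have "?I T = (\<integral> y. m T (restrict x T) * p S y \<partial>leb S)"
    proof (rule Bochner_Integration.integral_cong[OF refl])
      fix y
      have "restrict (upd S y x) T = restrict x T" using T by (intro ext) (auto simp: restrict_def upd_def)
      then show "m T (restrict (upd S y x) T) * p S y = m T (restrict x T) * p S y" by simp
    qed
    also have "\<dots> = m T (restrict x T)"
      using density_int[OF dens] by simp
    finally show "?I T = m T (restrict x T)" .
  qed
  finally show ?thesis by linarith
qed

theorem theorem1:
  fixes d :: nat
    and p :: "nat set \<Rightarrow> (nat \<Rightarrow> real) \<Rightarrow> real"
    and m0 :: "nat set \<Rightarrow> (nat \<Rightarrow> real) \<Rightarrow> real"
  assumes "d \<ge> 1"
    and "\<And>S. S \<subseteq> coords d \<Longrightarrow> is_density S (p S)"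
    and "\<And>V x. V \<subseteq> coords d \<Longrightarrow>
           integrable (leb (coords d - V))
             (\<lambda>y. m_sum d m0 (upd (coords d - V) y x) * p (coords d - V) y)"
    and "integrals_exist d p (m_star d p m0)"
  shows "admissible d p m0 (m_star d p m0)
       \<and> (\<forall>m. admissible d p m0 m \<longrightarrow>
            (\<forall>S \<subseteq> coords d. \<forall>x \<in> S \<rightarrow>\<^sub>E UNIV. m S x = m_star d p m0 S x))"
proof
  let ?D = "coords d"
  have d0: "is_density {} (p {})" using assms(2) by simp
  have sumid: "(\<Sum>T\<in>Pow ?D. m_star d p m0 T (restrict x T)) = m_sum d m0 x" for x
  proof -
    have "(\<Sum>T\<in>Pow ?D. m_star d p m0 T (restrict x T)) = (\<Sum>T\<in>Pow ?D. m_star d p m0 T x)"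
      by (rule sum.cong[OF refl]) (simp add: m_star_restrict)
    also have "\<dots> = m_sum d m0 x" by (simp add: sum_gf gf_top[where p=p, OF d0])
    finally show ?thesis .
  qed
  show "admissible d p m0 (m_star d p m0)"
    unfolding admissible_def
  proof (intro conjI allI impI)
    show "integrals_exist d p (m_star d p m0)" by (rule assms(4))
    show "(\<Sum>T\<in>Pow ?D. m_star d p m0 T (restrict x T)) = m_sum d m0 x" for x by (rule sumid)
    fix S x assume S: "S \<subseteq> ?D"
    have "(\<Sum>T\<in>Pow (?D - S). m_star d p m0 T (restrict x T)) = (\<Sum>T\<in>Pow (?D - S). m_star d p m0 T x)"
      by (rule sum.cong[OF refl]) (rule m_star_restrict, auto)
    also have "\<dots> = gf d p m0 (?D - S) x" by (rule sum_gf) auto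
    finally have F: "(\<Sum>T\<in>Pow (?D - S). m_star d p m0 T (restrict x T)) = gf d p m0 (?D - S) x" .
    show "(\<Sum>T\<in>{T\<in>Pow ?D. T \<inter> S \<noteq> {}}.
              \<integral> y. m_star d p m0 T (restrict (upd S y x) T) * p S y \<partial>leb S) = 0"
      using key[OF assms(2)[OF S] S assms(4) sumid, where x=x] F by linarith
  qed
  show "\<forall>m. admissible d p m0 m \<longrightarrow>
            (\<forall>S \<subseteq> coords d. \<forall>x \<in> S \<rightarrow>\<^sub>E UNIV. m S x = m_star d p m0 S x)"
  proof (intro allI impI ballI)
    fix m S and x :: "nat \<Rightarrow> real" assume adm: "admissible d p m0 m" and S: "S \<subseteq> ?D" and x: "x \<in> S \<rightarrow>\<^sub>E UNIV"
    have ie: "integrals_exist d p m" and sid: "\<And>x. (\<Sum>T\<in>Pow ?D. m T (restrict x T)) = m_sum d m0 x"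
      and orth: "\<And>S x. S \<subseteq> ?D \<Longrightarrow> (\<Sum>T\<in>{T\<in>Pow ?D. T \<inter> S \<noteq> {}}.
              \<integral> y. m T (restrict (upd S y x) T) * p S y \<partial>leb S) = 0"
      using adm unfolding admissible_def by blast+
    have H: "(\<Sum>T\<in>Pow A. m T (restrict x T)) = gf d p m0 A x" if A: "A \<subseteq> ?D" for A
    proof -
      have A': "?D - (?D - A) = A" using A by auto
      have sub: "?D - A \<subseteq> ?D" by auto
      note k = key[OF assms(2)[OF sub] sub ie sid, where x=x]
      note o = orth[OF sub, where x=x]
      from k o show ?thesis unfolding A' by linarith
    qed
    define f' where "f' T = (if T \<subseteq> ?D then m T (restrict x T) else 0)" for T
    define g' where "g' A = sum f' (Pow A)" for A
    have fS: "finite S" using S by (rule finite_subset) simp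
    have "f' S = (\<Sum>T \<in> Pow S. (-1) ^ (card S - card T) * g' T)"
      by (rule inclusion_exclusion_mobius) (use fS g'_def in auto)
    also have "\<dots> = (\<Sum>T \<in> Pow S. (-1) ^ card (S - T) * gf d p m0 T x)"
    proof (rule sum.cong[OF refl])
      fix T assume T: "T \<in> Pow S"
      have "g' T = (\<Sum>U\<in>Pow T. m U (restrict x U))"
        unfolding g'_def f'_def by (rule sum.cong[OF refl]) (use T S in auto)
      also have "\<dots> = gf d p m0 T x" using H T S by auto
      finally show "(-1) ^ (card S - card T) * g' T = (-1) ^ card (S - T) * gf d p m0 T x"
        using T fS by (simp add: card_Diff_subset finite_subset)
    qed
    also have "\<dots> = m_star d p m0 S x" by (simp add: m_star_gf)
    finally have "m S (restrict x S) = m_star d p m0 S x" using S by (simp add: f'_def)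
    moreover have "restrict x S = x" using x by (simp add: PiE_def extensional_restrict)
    ultimately show "m S x = m_star d p m0 S x" by simp
  qed
qed

end
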